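(* Let $\{x_k\}$ be an infinite sequence generated by Algorithm SInexPD (the Subgradient-InexP method with the dynamic stepsize rule), under the standing assumptions. Then $\inf_{k\ge0}f(x_k)=f^*$, where $f^*=\inf_{x\in C}f(x)$ (possibly $-\infty$).
   Context: Problem: minimize a convex $f:\mathbb{R}^n\to\mathbb{R}$ over a nonempty closed convex $C\subset\mathbb{R}^n$; $f^*:=\inf_{x\in C}f(x)$. For $\epsilon\ge0$, $\partial_\epsilon f(x):=\{s: f(y)\ge f(x)+\langle s,y-x\rangle-\epsilon\ \forall y\}$; $\partial f=\partial_0f$. Relative error tolerance function: any $\varphi_{\gamma,\theta,\lambda}:(\mathbb{R}^n)^3\to[0,\infty)$ with $\varphi_{\gamma,\theta,\lambda}(u,v,w)\le\gamma\|v-u\|^2+\theta\|w-v\|^2+\lambda\|w-u\|^2$; for $u\in C$, $\mathcal{P}_C(\varphi_{\gamma,\theta,\lambda},u,v):=\{w\in C:\langle v-w,z-w\rangle\le\varphi_{\gamma,\theta,\lambda}(u,v,w)\ \forall z\in C\}$. Standing assumptions: nonnegative sequences $\gamma_k\in[0,\bar\gamma)$, $\theta_k\in[0,\bar\theta)$, $\lambda_k\in[0,\bar\lambda)$ with $\bar\gamma\ge0$, $\bar\theta,\bar\lambda\in[0,1/2)$; $\nu:=\frac{1+2\bar\gamma}{1-2\bar\lambda}$; fixed $\mu\ge0$ and $0<\underline\beta\le\bar\beta<\frac{2}{2\mu+\nu}$. Algorithm SInexPD. Step 0: choose $x_0\in C$, $\delta_0>0$, $R>0$; set $k=0$, $\sigma_0=0$,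 $f^{rec}_{-1}=+\infty$, $\ell=0$, $k(0)=0$. Step 1: if $f(x_k)<f^{rec}_{k-1}$ set $f^{rec}_k=f(x_k)$, $x^{rec}_k=x_k$; else $f^{rec}_k=f^{rec}_{k-1}$, $x^{rec}_k=x^{rec}_{k-1}$. Step 2: if $0\in\partial f(x_k)$ stop. Step 3: if $f(x_k)\le f^{rec}_{k(\ell)}-\tfrac12\delta_\ell$, set $k(\ell+1)=k$, $\sigma_k=0$, $\delta_{\ell+1}=\delta_\ell$, $\ell\leftarrow\ell+1$ and go to Step 5. Step 4: if $\sigma_k>R$, set $k(\ell+1)=k$, $\sigma_k=0$, $\delta_{\ell+1}=\tfrac12\delta_\ell$, $x_k=x^{rec}_k$, $\ell\leftarrow\ell+1$. Step 5: set $f^{lev}_k:=f^{rec}_{k(\ell)}-\delta_\ell$; select $\beta_k\in[\underline\beta,\bar\beta]$ and $\epsilon_k$ with $\{\epsilon_k\}$ nonincreasing and $0<\epsilon_k\le\mu\beta_k[f(x_k)-f^{lev}_k]$; choose nonzero $s_k\in\partial_{\epsilon_k}f(x_k)$, set $\tilde t_k:=\beta_k\frac{f(x_k)-f^{lev}_k}{\|s_k\|}$, $t_k:=\tilde t_k/\|s_k\|$, and take any $x_{k+1}\in\mathcal{P}_C(\varphi_{\gamma_k,\theta_k,\lambda_k},x_k,x_k-t_ks_k)$. Step 6: set $\sigma_{k+1}:=\sigma_k+\tilde t_k$, $k\leftarrow k+1$, go to Step 1. *)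

theory Defs
  imports "HOL-Analysis.Analysis"
begin

definition eps_subdiff :: "('a::real_inner \<Rightarrow> real) \<Rightarrow> real \<Rightarrow> 'a \<Rightarrow> 'a set" where
  "eps_subdiff f eps x = {s. \<forall>y. f y \<ge> f x + inner s (y - x) - eps}"

definition rel_err_tol :: "real \<Rightarrow> real \<Rightarrow> real \<Rightarrow> ('a::real_normed_vector \<Rightarrow> 'a \<Rightarrow> 'a \<Rightarrow> real) \<Rightarrow> bool" where
  "rel_err_tol g th la phi \<longleftrightarrow>
     (\<forall>u v w. 0 \<le> phi u v w \<and>
        phi u v w \<le> g * (norm (v - u))^2 + th * (norm (w - v))^2 + la * (norm (w - u))^2)"

definition inexact_proj :: "'a::real_inner set \<Rightarrow> ('a \<Rightarrow> 'a \<Rightarrow> 'a \<Rightarrow> real) \<Rightarrow> 'a \<Rightarrow> 'a \<Rightarrow> 'a set" where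
  "inexact_proj C phi u v = {w \<in> C. \<forall>z\<in>C. inner (v - w) (z - w) \<le> phi u v w}"

end

theory Submission imports Defs begin

lemma sbound:
  fixes f :: "'a::euclidean_space \<Rightarrow> real"
  assumes cf: "convex_on UNIV f"
  shows "\<exists>L>0. \<forall>x e s. norm (x - y0) \<le> M \<longrightarrow> e \<le> E \<longrightarrow> s \<in> eps_subdiff f e x \<longrightarrow> norm s \<le> L"
proof -
  have "continuous_on UNIV f" using convex_on_continuous[OF open_UNIV cf] .
  then have "continuous_on (cball y0 (M+1)) f" by (rule continuous_on_subset) auto
  then have "compact (f ` cball y0 (M+1))" by (intro compact_continuous_image) auto
  then obtain B where B: "B > 0" "\<forall>z\<in>f ` cball y0 (M+1). norm z \<le> B"
    using compact_imp_bounded bounded_pos by metis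
  have Bz: "\<bar>f z\<bar> \<le> B" if "norm (z - y0) \<le> M + 1" for z
    using B(2) that by (auto simp: dist_norm norm_minus_commute)
  show ?thesis
  proof (intro exI[of _ "2*B + \<bar>E\<bar> + 1"] conjI allI impI)
    show "0 < 2*B + \<bar>E\<bar> + 1" using B by simp
    fix x e s assume x: "norm (x - y0) \<le> M" and e: "e \<le> E" and s: "s \<in> eps_subdiff f e x"
    show "norm s \<le> 2*B + \<bar>E\<bar> + 1"
    proof (cases "s = 0")
      case True then show ?thesis using B by simp
    next
      case False
      define z where "z = x + (1 / norm s) *\<^sub>R s"
      have nz: "norm (z - x) = 1" using False by (simp add: z_def)
      have "norm (z - y0) \<le> norm (z - x) + norm (x - y0)"
        using norm_triangle_ineq[of "z - x" "x - y0"] by simp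
      then have z1: "norm (z - y0) \<le> M + 1" using nz x by simp
      have "f z \<ge> f x + inner s (z - x) - e" using s by (auto simp: eps_subdiff_def)
      moreover have "inner s (z - x) = norm s"
        using False by (simp add: z_def inner_commute power2_norm_eq_inner[symmetric] power2_eq_square)
      ultimately have "norm s \<le> f z - f x + e" by simp
      moreover have "\<bar>f z\<bar> \<le> B" using Bz z1 by blast
      moreover have "\<bar>f x\<bar> \<le> B" using Bz x by simp
      ultimately show ?thesis using e by linarith
    qed
  qed
qed

lemma projlem:
  fixes u v w y :: "'a::real_inner"
  assumes u: "u \<in> C" and y: "y \<in> C" and w: "w \<in> inexact_proj C phi u v"
    and ph: "rel_err_tol g th la phi" and g: "0 \<le> g" and th: "0 \<le> th" "th < 1/2"
    and la: "0 \<le> la" "la < 1/2"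
  shows "(norm (w - y))^2 \<le> (norm (v - y))^2 + ((1+2*g)/(1-2*la) - 1) * (norm (v - u))^2"
    and "(norm (w - u))^2 \<le> ((1+2*g)/(1-2*la)) * (norm (v - u))^2"
proof -
  define A where "A = (norm (w - u))^2"
  define P where "P = (norm (v - w))^2"
  define b where "b = (norm (v - u))^2"
  have pb: "phi u v w \<le> g * b + th * P + la * A"
    using ph unfolding rel_err_tol_def A_def P_def b_def by (simp add: norm_minus_commute)
  have wC: "w \<in> C" and pr: "\<And>z. z \<in> C \<Longrightarrow> inner (v - w) (z - w) \<le> phi u v w"
    using w by (auto simp: inexact_proj_def)
  have id1: "A = b - P + 2 * inner (v - w) (u - w)"
    unfolding A_def b_def P_def
    by (simp add: power2_norm_eq_inner inner_diff_left inner_diff_right inner_commute algebra_simps)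
  have id2: "(norm (w - y))^2 = (norm (v - y))^2 - P + 2 * inner (v - w) (y - w)"
    unfolding P_def
    by (simp add: power2_norm_eq_inner inner_diff_left inner_diff_right inner_commute algebra_simps)
  have h1: "(1 - 2*la) * A \<le> (1 + 2*g) * b - (1 - 2*th) * P"
    using id1 pr[OF u] pb by (simp add: algebra_simps)
  have h2: "(norm (w - y))^2 \<le> (norm (v - y))^2 - (1 - 2*th) * P + 2*g*b + 2*la*A"
    using id2 pr[OF y] pb by (simp add: algebra_simps)
  have pos: "1 - 2*la > 0" using la by simp
  have P0: "P \<ge> 0" "b \<ge> 0" "A \<ge> 0" by (auto simp: P_def b_def A_def)
  have A: "A \<le> ((1 + 2*g) * b - (1 - 2*th) * P) / (1 - 2*la)"
    using h1 pos by (simp add: field_simps)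
  have "2*la*A \<le> 2*la*(((1 + 2*g) * b - (1 - 2*th) * P) / (1 - 2*la))"
    using A la by (intro mult_left_mono) auto
  also have "\<dots> \<le> 2*la*((1 + 2*g) * b / (1 - 2*la))"
    using pos th P0 la by (intro mult_left_mono divide_right_mono) auto
  finally have "2*la*A \<le> 2*la*((1 + 2*g) * b / (1 - 2*la))" .
  moreover have "(1 - 2*th) * P \<ge> 0" using th P0 by simp
  moreover have "2*g*b + 2*la*((1 + 2*g) * b / (1 - 2*la)) = ((1+2*g)/(1-2*la) - 1) * b"
    using pos by (simp add: field_simps)
  ultimately show "(norm (w - y))^2 \<le> (norm (v - y))^2 + ((1+2*g)/(1-2*la) - 1) * (norm (v - u))^2"
    using h2 unfolding b_def by linarith
  have "((1 + 2*g) * b - (1 - 2*th) * P) / (1 - 2*la) \<le> (1 + 2*g) * b / (1 - 2*la)"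
    using pos th P0 by (intro divide_right_mono) auto
  with A have "A \<le> (1 + 2*g) * b / (1 - 2*la)" by linarith
  then show "(norm (w - u))^2 \<le> ((1+2*g)/(1-2*la)) * (norm (v - u))^2"
    unfolding A_def b_def by (simp only: times_divide_eq_left)
qed

theorem mainTheorem10:
  fixes f :: "'a::euclidean_space \<Rightarrow> real" and C :: "'a set"
    and x xr xrec s :: "nat \<Rightarrow> 'a"
    and frec flev sig sg beta eps tt gam the lam :: "nat \<Rightarrow> real"
    and lc lc' kk :: "nat \<Rightarrow> nat" and dl :: "nat \<Rightarrow> real"
    and phi :: "nat \<Rightarrow> 'a \<Rightarrow> 'a \<Rightarrow> 'a \<Rightarrow> real"
    and R gb tb lb mu blo bhi :: real
  assumes f_convex: "convex_on UNIV f"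
    and C_closed: "closed C" and C_convex: "convex C" and C_ne: "C \<noteq> {}"
    \<comment> \<open>standing assumptions\<close>
    and gam: "\<And>k. 0 \<le> gam k \<and> gam k < gb" and gb: "0 \<le> gb"
    and the: "\<And>k. 0 \<le> the k \<and> the k < tb" and tb: "0 \<le> tb" "tb < 1/2"
    and lam: "\<And>k. 0 \<le> lam k \<and> lam k < lb" and lb: "0 \<le> lb" "lb < 1/2"
    and mu: "0 \<le> mu"
    and betas: "0 < blo" "blo \<le> bhi" "bhi < 2 / (2 * mu + (1 + 2 * gb) / (1 - 2 * lb))"
    \<comment> \<open>Step 0\<close>
    and x0: "x 0 \<in> C" and dl0: "dl 0 > 0" and R: "R > 0"
    and init: "sig 0 = 0" "lc 0 = 0" "kk 0 = 0"
    \<comment> \<open>Step 1 (record values; f_rec_{-1} = +infinity)\<close>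
    and rec0: "frec 0 = f (x 0)" "xrec 0 = x 0"
    and recS: "\<And>k. if f (x (Suc k)) < frec k
                 then frec (Suc k) = f (x (Suc k)) \<and> xrec (Suc k) = x (Suc k)
                 else frec (Suc k) = frec k \<and> xrec (Suc k) = xrec k"
    \<comment> \<open>Step 2: the algorithm never stops (infinite sequence)\<close>
    and nostop: "\<And>k. 0 \<notin> eps_subdiff f 0 (x k)"
    \<comment> \<open>Steps 3 and 4; xr k is x_k after a possible reset, sg k is sigma_k after a possible reset,
        lc k / lc' k is the counter l before / after Steps 3-4\<close>
    and step34: "\<And>k.
       if f (x k) \<le> frec (kk (lc k)) - dl (lc k) / 2
       then kk (Suc (lc k)) = k \<and> sg k = 0 \<and> dl (Suc (lc k)) = dl (lc k)
            \<and> lc' k = Suc (lc k) \<and> xr k = x k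
       else if sig k > R
       then kk (Suc (lc k)) = k \<and> sg k = 0 \<and> dl (Suc (lc k)) = dl (lc k) / 2
            \<and> lc' k = Suc (lc k) \<and> xr k = xrec k
       else sg k = sig k \<and> lc' k = lc k \<and> xr k = x k"
    \<comment> \<open>Step 5\<close>
    and flev: "\<And>k. flev k = frec (kk (lc' k)) - dl (lc' k)"
    and beta: "\<And>k. blo \<le> beta k \<and> beta k \<le> bhi"
    and eps_noninc: "\<And>k. eps (Suc k) \<le> eps k"
    and eps: "\<And>k. 0 < eps k \<and> eps k \<le> mu * beta k * (f (xr k) - flev k)"
    and s: "\<And>k. s k \<noteq> 0 \<and> s k \<in> eps_subdiff f (eps k) (xr k)"
    and tt: "\<And>k. tt k = beta k * (f (xr k) - flev k) / norm (s k)"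
    and phi: "\<And>k. rel_err_tol (gam k) (the k) (lam k) (phi k)"
    and xS: "\<And>k. x (Suc k) \<in> inexact_proj C (phi k) (xr k) (xr k - (tt k / norm (s k)) *\<^sub>R s k)"
    \<comment> \<open>Step 6\<close>
    and sigS: "\<And>k. sig (Suc k) = sg k + tt k"
    and lcS: "\<And>k. lc (Suc k) = lc' k"
  shows "(INF k. ereal (f (x k))) = (INF y\<in>C. ereal (f y))"
proof -
  define dec where "dec k \<longleftrightarrow> f (x k) \<le> frec (kk (lc k)) - dl (lc k) / 2" for k
  define rst where "rst k \<longleftrightarrow> \<not> dec k \<and> sig k > R" for k
  define a where "a k = frec (kk (lc k))" for k
  define dd where "dd k = dl (lc k)" for k
  define nu where "nu = (1 + 2*gb) / (1 - 2*lb)"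
  have Sdec: "kk (Suc (lc k)) = k \<and> sg k = 0 \<and> dl (Suc (lc k)) = dl (lc k) \<and> lc' k = Suc (lc k) \<and> xr k = x k"
    if "dec k" for k using step34[of k] that unfolding dec_def by simp
  have Srst: "kk (Suc (lc k)) = k \<and> sg k = 0 \<and> dl (Suc (lc k)) = dl (lc k) / 2 \<and> lc' k = Suc (lc k) \<and> xr k = xrec k"
    if "rst k" for k using step34[of k] that unfolding dec_def rst_def by simp
  have Sel: "sg k = sig k \<and> lc' k = lc k \<and> xr k = x k"
    if "\<not> dec k" "\<not> rst k" for k using step34[of k] that unfolding dec_def rst_def by auto
  have a_Suc: "a (Suc k) = (if dec k \<or> rst k then frec k else a k)" for k
    using Sdec[of k] Srst[of k] Sel[of k] lcS[of k] unfolding a_def by auto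
  have dd_Suc: "dd (Suc k) = (if rst k then dd k / 2 else dd k)" for k
    using Sdec[of k] Srst[of k] Sel[of k] lcS[of k] unfolding dd_def rst_def by (cases "dec k") auto
  have flev_eq: "flev k = a (Suc k) - dd (Suc k)" for k
    using flev[of k] lcS[of k] unfolding a_def dd_def by simp
  have sig_Suc: "sig (Suc k) = (if dec k \<or> rst k then 0 else sig k) + tt k" for k
    using Sdec[of k] Srst[of k] Sel[of k] sigS[of k] by auto
  have xr_cases: "xr k = (if rst k then xrec k else x k)" for k
    using Sdec[of k] Srst[of k] Sel[of k] unfolding rst_def by auto
  have recf: "frec k = f (xrec k) \<and> (\<exists>j\<le>k. xrec k = x j)" for k
  proof (induction k)
    case 0 then show ?case using rec0 by auto
  next
    case (Suc k) then show ?case using recS[of k] by (auto split: if_splits intro: le_SucI)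
  qed
  have frec_mono: "frec (Suc k) \<le> frec k" for k using recS[of k] by (auto split: if_splits)
  have frec_le: "frec k \<le> f (x k)" for k
    using recS[of "k - 1"] rec0 by (cases k) (auto split: if_splits)
  have xC: "x k \<in> C" for k
    using xS[of "k - 1"] x0 by (cases k) (auto simp: inexact_proj_def)
  have xrecC: "xrec k \<in> C" for k using recf[of k] xC by auto
  have xrC: "xr k \<in> C" for k using xr_cases[of k] xC xrecC by auto
  have dd_pos: "dd k > 0" for k
  proof (induction k)
    case 0 show ?case using init dl0 by (simp add: dd_def)
  next
    case (Suc k) then show ?case using dd_Suc[of k] by simp
  qed
  have dd_mono: "dd (Suc k) \<le> dd k" for k using dd_pos[of k] by (simp add: dd_Suc)
  have a0: "a 0 = frec 0" using init by (simp add: a_def)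
  have a_ge: "a k \<ge> frec k" for k
  proof (induction k)
    case 0 then show ?case using a0 by simp
  next
    case (Suc k) then show ?case using a_Suc[of k] frec_mono[of k] by auto
  qed
  have a_mono: "a (Suc k) \<le> a k" for k using a_Suc[of k] a_ge[of k] by auto
  have nodec0: "\<not> dec 0" using a0 rec0 dl0 init unfolding dec_def a_def by simp
  have norst0: "\<not> rst 0" using init R unfolding rst_def by simp
  have INV: "frec k > a (Suc k) - dd (Suc k) / 2" for k
  proof (induction k)
    case 0 then show ?case using nodec0 norst0 a_Suc[of 0] dd_Suc[of 0] a0 dd_pos[of 0] by simp
  next
    case (Suc k)
    show ?case
    proof (cases "dec (Suc k) \<or> rst (Suc k)")
      case True then show ?thesis using a_Suc[of "Suc k"] dd_pos[of "Suc (Suc k)"] by simp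
    next
      case False
      then have "a (Suc (Suc k)) = a (Suc k)" "dd (Suc (Suc k)) = dd (Suc k)"
        using a_Suc[of "Suc k"] dd_Suc[of "Suc k"] by auto
      moreover have "f (x (Suc k)) > a (Suc k) - dd (Suc k) / 2"
        using False unfolding dec_def a_def dd_def by auto
      ultimately show ?thesis using Suc recS[of k] by (auto split: if_splits)
    qed
  qed
  have start_rec: "xr p = xrec p \<and> a (Suc p) = frec p \<and> sig (Suc p) = tt p"
    if "p = 0 \<or> dec p \<or> rst p" for p
  proof (cases "p = 0")
    case True then show ?thesis
      using nodec0 norst0 xr_cases[of 0] rec0 a_Suc[of 0] a0 sig_Suc[of 0] init by simp
  next
    case False
    then obtain p' where p': "p = Suc p'" by (cases p) auto
    have dr: "dec p \<or> rst p" using that False by simp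
    have "xr p = xrec p"
    proof (cases "rst p")
      case True then show ?thesis using xr_cases by simp
    next
      case False
      then have "dec p" using dr by simp
      then have "f (x p) \<le> a p - dd p / 2" unfolding dec_def a_def dd_def .
      then have "f (x p) < frec p'" using INV[of p'] p' by simp
      then show ?thesis using recS[of p'] p' xr_cases[of p] False by simp
    qed
    then show ?thesis using dr a_Suc[of p] sig_Suc[of p] by auto
  qed
  have Dpos: "f (xr k) - flev k > 0" for k
  proof (rule ccontr)
    assume "\<not> ?thesis"
    then have "mu * beta k * (f (xr k) - flev k) \<le> 0"
      using mu beta[of k] betas by (intro mult_nonneg_nonpos) auto
    then show False using eps[of k] by simp
  qed
  have snz: "norm (s k) > 0" for k using s[of k] by simp
  have tt_pos: "tt k > 0" for k
    using tt[of k] Dpos[of k] snz[of k] beta[of k] betas by simp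
  have sig_nn: "sig k \<ge> 0" for k
    by (induction k) (auto simp: init sig_Suc intro: add_nonneg_nonneg less_imp_le[OF tt_pos])
  have eps_le: "eps k \<le> eps 0" for k
    by (rule lift_Suc_antimono_le[of eps 0 k]) (use eps_noninc in auto)
  have nu_pos: "nu \<ge> 1" using gb lb unfolding nu_def by (simp add: field_simps)
  have bnu: "beta k * (2*mu + nu) < 2" for k
  proof -
    have "2*mu + nu > 0" using mu nu_pos by simp
    then have "bhi * (2*mu + nu) < 2" using betas(3) unfolding nu_def by (simp add: pos_less_divide_eq)
    moreover have "beta k * (2*mu + nu) \<le> bhi * (2*mu + nu)"
      using beta[of k] \<open>2*mu + nu > 0\<close> by (intro mult_right_mono) auto
    ultimately show ?thesis by simp
  qed
  have step: "norm (x (Suc k) - y)^2 \<le> norm (xr k - y)^2 - 2 * (tt k / norm (s k)) * (f (xr k) - f y - eps k) + nu * (tt k)^2"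
    and disp: "norm (x (Suc k) - xr k)^2 \<le> nu * (tt k)^2"
    if yC: "y \<in> C" for k y
  proof -
    define u where "u = xr k"
    define t where "t = tt k / norm (s k)"
    define v where "v = u - t *\<^sub>R s k"
    have tpos: "t > 0" using tt_pos[of k] snz[of k] by (simp add: t_def)
    have tns: "t * norm (s k) = tt k" using snz[of k] by (simp add: t_def)
    have nvu: "norm (v - u) = tt k" using tpos tns by (simp add: v_def)
    have ex: "norm (v - y)^2 = norm (u - y)^2 - 2 * t * inner (s k) (u - y) + (t * norm (s k))^2"
    proof -
      have e: "v - y = (u - y) - t *\<^sub>R s k" by (simp add: v_def algebra_simps)
      have "norm (v - y)^2 = inner ((u - y) - t *\<^sub>R s k) ((u - y) - t *\<^sub>R s k)"
        unfolding power2_norm_eq_inner e by (rule refl)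
      also have "\<dots> = inner (u - y) (u - y) - 2 * t * inner (s k) (u - y) + t^2 * inner (s k) (s k)"
        by (simp add: inner_diff_left inner_diff_right inner_commute power2_eq_square algebra_simps)
      finally show ?thesis by (simp add: power2_norm_eq_inner power_mult_distrib)
    qed
    have sg: "f y \<ge> f u + inner (s k) (y - u) - eps k" using s[of k] by (simp add: eps_subdiff_def u_def)
    have ip: "inner (s k) (u - y) \<ge> f u - f y - eps k" using sg by (simp add: inner_diff_right)
    have wk: "x (Suc k) \<in> inexact_proj C (phi k) u v" using xS[of k] by (simp add: u_def v_def t_def)
    have g0: "0 \<le> gam k" "0 \<le> the k" "the k < 1/2" "0 \<le> lam k" "lam k < 1/2"
      using gam[of k] the[of k] lam[of k] tb lb by auto
    have nuk: "(1 + 2 * gam k) / (1 - 2 * lam k) \<le> nu"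
      unfolding nu_def using gam[of k] lam[of k] lb by (intro frac_le) auto
    have P1: "norm (x (Suc k) - y)^2 \<le> norm (v - y)^2 + ((1 + 2 * gam k) / (1 - 2 * lam k) - 1) * (norm (v - u))^2"
      using projlem(1)[OF xrC[of k, folded u_def] yC wk phi[of k] g0] .
    have P2: "norm (x (Suc k) - u)^2 \<le> ((1 + 2 * gam k) / (1 - 2 * lam k)) * (norm (v - u))^2"
      using projlem(2)[OF xrC[of k, folded u_def] yC wk phi[of k] g0] .
    have tt2: "(tt k)^2 \<ge> 0" by simp
    have "((1 + 2 * gam k) / (1 - 2 * lam k) - 1) * (tt k)^2 \<le> (nu - 1) * (tt k)^2"
      using nuk by (intro mult_right_mono) auto
    moreover have "t * inner (s k) (u - y) \<ge> t * (f u - f y - eps k)"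
      using ip tpos by (intro mult_left_mono) auto
    moreover have "norm (x (Suc k) - y)^2 \<le> norm (u - y)^2 - 2 * t * inner (s k) (u - y) + (tt k)^2
        + ((1 + 2 * gam k) / (1 - 2 * lam k) - 1) * (tt k)^2"
      using P1 unfolding ex nvu tns by simp
    ultimately have "norm (x (Suc k) - y)^2 \<le> norm (u - y)^2 - 2 * (t * (f u - f y - eps k)) + nu * (tt k)^2"
      by (simp add: algebra_simps)
    then show "norm (x (Suc k) - y)^2 \<le> norm (xr k - y)^2 - 2 * (tt k / norm (s k)) * (f (xr k) - f y - eps k) + nu * (tt k)^2"
      unfolding u_def t_def by simp
    have "((1 + 2 * gam k) / (1 - 2 * lam k)) * (tt k)^2 \<le> nu * (tt k)^2"
      using nuk by (intro mult_right_mono) auto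
    then show "norm (x (Suc k) - xr k)^2 \<le> nu * (tt k)^2" using P2 nvu unfolding u_def by simp
  qed
  have fejer: "norm (x (Suc k) - y)^2 \<le> norm (xr k - y)^2 - 2 * (tt k / norm (s k)) * eta"
    if yC: "y \<in> C" and fy: "f y \<le> flev k - eta" and eta: "eta \<ge> 0" for k y eta
  proof -
    define D where "D = f (xr k) - flev k"
    define t where "t = tt k / norm (s k)"
    define b where "b = beta k"
    have Dp: "D > 0" using Dpos[of k] by (simp add: D_def)
    have tpos: "t > 0" using tt_pos[of k] snz[of k] by (simp add: t_def)
    have ttD: "tt k = b * D / norm (s k)" using tt[of k] by (simp add: b_def D_def)
    have tt2: "(tt k)^2 = t * b * D" using ttD by (simp add: t_def power2_eq_square)
    have epsb: "eps k \<le> mu * b * D" using eps[of k] by (simp add: b_def D_def)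
    have ge: "f (xr k) - f y - eps k \<ge> D + eta - mu * b * D" using fy epsb by (simp add: D_def)
    have "t * (f (xr k) - f y - eps k) \<ge> t * (D + eta - mu * b * D)"
      using ge tpos by (intro mult_left_mono) auto
    moreover have "t * D * (2 - b * (2*mu + nu)) \<ge> 0"
      using bnu[of k] tpos Dp by (simp add: b_def)
    ultimately show ?thesis
      using step[OF yC, of k] tt2 unfolding t_def[symmetric]
      by (simp add: algebra_simps)
  qed
  have dispn: "norm (x (Suc k) - xr k) \<le> sqrt nu * tt k" for k
  proof -
    have "norm (x (Suc k) - xr k) = sqrt ((norm (x (Suc k) - xr k))^2)" by simp
    also have "\<dots> \<le> sqrt (nu * (tt k)^2)" using disp[OF xC[of 0], of k] by (rule real_sqrt_le_mono)
    also have "\<dots> = sqrt nu * tt k" using tt_pos[of k] by (simp add: real_sqrt_mult)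
    finally show ?thesis .
  qed
  have a_anti: "a k' \<le> a k" if "k \<le> k'" for k k'
    using lift_Suc_antimono_le[of a, OF a_mono that] .
  have dd_anti: "dd k' \<le> dd k" if "k \<le> k'" for k k'
    using lift_Suc_antimono_le[of dd, OF dd_mono that] .
  have core: False if yC: "y \<in> C" and fyc: "f y < c" and fxc: "\<And>k. c \<le> f (x k)" for y c
  proof -
    have frec_c: "frec k \<ge> c" for k using recf[of k] fxc by auto
    have a_c: "a k \<ge> c" for k using a_ge[of k] frec_c[of k] by simp
    show False
    proof (cases "\<exists>K. \<forall>k\<ge>K. \<not> rst k")
      case True
      then obtain K where K: "\<And>k. k \<ge> K \<Longrightarrow> \<not> rst k" by blast
      have ddK: "dd k = dd K" if "k \<ge> K" for k
        using that
      proof (induction k rule: dec_induct)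
        case (step k) then show ?case using dd_Suc[of k] K[of k] by simp
      qed simp
      have "\<exists>K2\<ge>K. \<forall>k\<ge>K2. \<not> dec k"
      proof (rule ccontr)
        assume "\<not> ?thesis"
        then have inf: "\<And>N. N \<ge> K \<Longrightarrow> \<exists>k\<ge>N. dec k" by blast
        have mm: "\<exists>N\<ge>K. a N \<le> a K - real m * dd K / 2" for m
        proof (induction m)
          case 0 show ?case by auto
        next
          case (Suc m)
          then obtain N where N: "N \<ge> K" "a N \<le> a K - real m * dd K / 2" by blast
          obtain k where k: "k \<ge> N" "dec k" using inf N(1) by blast
          have "a (Suc k) = frec k" using a_Suc[of k] k(2) by simp
          also have "\<dots> \<le> f (x k)" by (rule frec_le)
          also have "\<dots> \<le> a k - dd k / 2" using k(2) unfolding dec_def a_def dd_def .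
          finally have "a (Suc k) \<le> a k - dd K / 2" using ddK[of k] k N by simp
          moreover have "a k \<le> a N" using a_anti k(1) by simp
          ultimately have "a (Suc k) \<le> a K - real (Suc m) * dd K / 2" using N(2) by (simp add: algebra_simps add_divide_distrib)
          then show ?case using k N by (intro exI[of _ "Suc k"]) auto
        qed
        obtain m :: nat where m: "2 * (a K - c) / dd K < real m" using reals_Archimedean2 by blast
        have "real m * dd K / 2 > a K - c" using m dd_pos[of K] by (simp add: field_simps)
        moreover obtain N where "a N \<le> a K - real m * dd K / 2" using mm[of m] by blast
        ultimately show False using a_c[of N] by linarith
      qed
      then obtain K2 where K2: "K2 \<ge> K" "\<And>k. k \<ge> K2 \<Longrightarrow> \<not> dec k" by blast
      have nd: "\<not> dec k" "\<not> rst k" if "k \<ge> K2" for k using K2 K that by auto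
      have aK: "a k = a K2" if "k \<ge> K2" for k
        using that
      proof (induction k rule: dec_induct)
        case (step k) then show ?case using a_Suc[of k] nd[of k] by simp
      qed simp
      have dK: "dd k = dd K2" if "k \<ge> K2" for k
        using that
      proof (induction k rule: dec_induct)
        case (step k) then show ?case using dd_Suc[of k] nd[of k] by simp
      qed simp
      define del where "del = dd K2"
      have delp: "del > 0" using dd_pos by (simp add: del_def)
      have xrx: "xr k = x k" if "k \<ge> K2" for k using xr_cases[of k] nd[OF that] by simp
      have Dlow: "f (xr k) - flev k > del / 2" if "k \<ge> K2" for k
      proof -
        have "flev k = a K2 - del" using flev_eq[of k] aK[of "Suc k"] dK[of "Suc k"] that by (simp add: del_def)
        moreover have "f (x k) > a K2 - del / 2"
          using nd(1)[OF that] aK[OF that] dK[OF that] unfolding dec_def a_def dd_def del_def by simp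
        ultimately show ?thesis using xrx[OF that] by simp
      qed
      have sigsum: "sig (K2 + n) = sig K2 + (\<Sum>j<n. tt (K2 + j))" for n
      proof (induction n)
        case (Suc n) then show ?case using sig_Suc[of "K2 + n"] nd[of "K2 + n"] by simp
      qed simp
      have sigR: "sig k \<le> R" if "k \<ge> K2" for k using nd[OF that] unfolding rst_def by simp
      have dsum: "norm (x (K2 + n) - x K2) \<le> sqrt nu * (\<Sum>j<n. tt (K2 + j))" for n
      proof (induction n)
        case (Suc n)
        have "norm (x (K2 + Suc n) - x K2) \<le> norm (x (Suc (K2 + n)) - x (K2 + n)) + norm (x (K2 + n) - x K2)"
          using norm_triangle_ineq[of "x (Suc (K2 + n)) - x (K2 + n)" "x (K2 + n) - x K2"] by simp
        also have "\<dots> \<le> sqrt nu * tt (K2 + n) + sqrt nu * (\<Sum>j<n. tt (K2 + j))"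
          using dispn[of "K2 + n"] xrx[of "K2 + n"] Suc by simp
        finally show ?case by (simp add: algebra_simps)
      qed simp
      have bnd: "norm (x k - x K2) \<le> sqrt nu * R" if kK: "k \<ge> K2" for k
      proof -
        obtain n where n: "k = K2 + n" using le_Suc_ex[OF kK] by (elim exE)
        have "(\<Sum>j<n. tt (K2 + j)) \<le> R" using sigsum[of n] sigR[of "K2 + n"] sig_nn[of K2] by simp
        then have "sqrt nu * (\<Sum>j<n. tt (K2 + j)) \<le> sqrt nu * R" using nu_pos by (intro mult_left_mono) auto
        then show ?thesis using dsum[of n] n by simp
      qed
      obtain L where L: "L > 0" "\<forall>x' e s'. norm (x' - x K2) \<le> sqrt nu * R \<longrightarrow> e \<le> eps 0 \<longrightarrow> s' \<in> eps_subdiff f e x' \<longrightarrow> norm s' \<le> L"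
        using sbound[OF f_convex, of "x K2" "sqrt nu * R" "eps 0"] by (elim exE conjE) (rule that)
      have sL: "norm (s k) \<le> L" if "k \<ge> K2" for k
      proof -
        have "norm (xr k - x K2) \<le> sqrt nu * R" using bnd[OF that] xrx[OF that] by simp
        moreover have "s k \<in> eps_subdiff f (eps k) (xr k)" using s[of k] by simp
        ultimately show ?thesis using L(2) eps_le[of k] by blast
      qed
      define m0 where "m0 = blo * (del / 2) / L"
      have m0p: "m0 > 0" using betas delp L by (simp add: m0_def)
      have ttlow: "tt k \<ge> m0" if "k \<ge> K2" for k
      proof -
        have "blo * (del / 2) \<le> beta k * (f (xr k) - flev k)"
          using beta[of k] betas Dlow[OF that] delp by (intro mult_mono) auto
        then have "blo * (del / 2) / L \<le> beta k * (f (xr k) - flev k) / norm (s k)"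
          using sL[OF that] snz[of k] betas Dlow[OF that] beta[of k] delp by (intro frac_le) auto
        then show ?thesis using tt[of k] by (simp add: m0_def)
      qed
      obtain n :: nat where n: "R / m0 < real n" using reals_Archimedean2 by blast
      have "real n * m0 > R" using n m0p by (simp add: field_simps)
      moreover have "real n * m0 \<le> (\<Sum>j<n. tt (K2 + j))"
        using sum_bounded_below[of "{..<n}" m0 "\<lambda>j. tt (K2 + j)"] ttlow by simp
      ultimately have "sig (K2 + n) > R" using sigsum[of n] sig_nn[of K2] by simp
      then show False using sigR[of "K2 + n"] by simp
    next
      case False
      then have inf: "\<And>K. \<exists>k\<ge>K. rst k" by auto
      have ddhalf: "\<exists>N. dd N \<le> dd 0 / 2 ^ m" for m
      proof (induction m)
        case 0 show ?case by (intro exI[of _ 0]) simp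
      next
        case (Suc m)
        then obtain N where N: "dd N \<le> dd 0 / 2 ^ m" by blast
        obtain k where k: "k \<ge> N" "rst k" using inf by blast
        have "dd (Suc k) = dd k / 2" using dd_Suc[of k] k(2) by simp
        also have "\<dots> \<le> dd N / 2" using dd_anti[OF k(1)] by simp
        also have "\<dots> \<le> dd 0 / 2 ^ Suc m" using N by (simp add: field_simps)
        finally show ?case by blast
      qed
      have ddsmall: "\<exists>N. \<forall>k\<ge>N. dd k < e" if ep: "e > 0" for e
      proof -
        obtain m :: nat where m: "dd 0 / e < real m" using reals_Archimedean2 by blast
        have "real m < 2 ^ m" by (rule of_nat_less_two_power)
        with m have "dd 0 / e < 2 ^ m" by linarith
        then have lt: "dd 0 / 2 ^ m < e" using ep by (simp add: field_simps)
        obtain N where N: "dd N \<le> dd 0 / 2 ^ m" using ddhalf by blast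
        show ?thesis using N lt dd_anti by (intro exI[of _ N]) (auto intro: order.strict_trans1 order.trans)
      qed
      define eta0 where "eta0 = (c - f y) / 2"
      have eta0p: "eta0 > 0" using fyc by (simp add: eta0_def)
      obtain K0 where K0: "\<And>k. k \<ge> K0 \<Longrightarrow> dd k < eta0" using ddsmall[OF eta0p] by blast
      have fej0: "norm (x (Suc k) - y) \<le> norm (xr k - y)" if "k \<ge> K0" for k
      proof -
        have "flev k \<ge> f y"
          using flev_eq[of k] a_c[of "Suc k"] K0[of "Suc k"] that eta0p unfolding eta0_def by simp
        then have "norm (x (Suc k) - y)^2 \<le> norm (xr k - y)^2"
          using fejer[OF yC, of k 0] by simp
        then show ?thesis by (rule power2_le_imp_le) simp
      qed
      define M where "M = Max ((\<lambda>j. norm (x j - y)) ` {..K0})"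
      have xM: "norm (x k - y) \<le> M" for k
      proof (induction k rule: less_induct)
        case (less k)
        show ?case
        proof (cases "k \<le> K0")
          case True then show ?thesis unfolding M_def by (intro Max_ge) auto
        next
          case False
          then obtain k' where k': "k = Suc k'" "k' \<ge> K0" by (cases k) auto
          have "norm (xr k' - y) \<le> M"
          proof (cases "rst k'")
            case True
            obtain j where j: "j \<le> k'" "xrec k' = x j" using recf[of k'] by blast
            then show ?thesis using xr_cases[of k'] True less[of j] k' by simp
          next
            case False then show ?thesis using xr_cases[of k'] less[of k'] k' by simp
          qed
          then show ?thesis using fej0[OF k'(2)] k' by simp
        qed
      qed
      have xrecM: "norm (xrec k - y) \<le> M" for k using recf[of k] xM by auto
      have xrM: "norm (xr k - y) \<le> M" for k using xr_cases[of k] xM xrecM by (cases "rst k") auto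
      have M0: "M \<ge> 0" using xM[of 0] norm_ge_zero[of "x 0 - y"] by linarith
      obtain L where L: "L > 0" "\<forall>x' e s'. norm (x' - y) \<le> M \<longrightarrow> e \<le> eps 0 \<longrightarrow> s' \<in> eps_subdiff f e x' \<longrightarrow> norm s' \<le> L"
        using sbound[OF f_convex, of y M "eps 0"] by (elim exE conjE) (rule that)
      have sL: "norm (s k) \<le> L" for k
      proof -
        have "s k \<in> eps_subdiff f (eps k) (xr k)" using s[of k] by simp
        then show ?thesis using L(2) eps_le[of k] xrM[of k] by blast
      qed
      define ds where "ds = min eta0 (R * eta0^2 / (L * (M^2 + 1)))"
      have LMp: "L * (M^2 + 1) > 0" using L(1) by (intro mult_pos_pos) (auto intro: add_nonneg_pos)
      then have dsp: "ds > 0" using eta0p R L(1) by (simp add: ds_def)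
      obtain K1 where K1: "\<And>k. k \<ge> K1 \<Longrightarrow> dd k < ds" using ddsmall[OF dsp] by blast
      obtain q where q: "q \<ge> K1" "rst q" using inf by blast
      have q0: "q > 0" using q(2) norst0 by (cases q) auto
      define St where "St p \<longleftrightarrow> p = 0 \<or> dec p \<or> rst p" for p
      define PP where "PP = {p. p < q \<and> St p}"
      define p where "p = Max PP"
      have finPP: "finite PP" unfolding PP_def by (rule finite_subset[of _ "{..<q}"]) auto
      have nePP: "0 \<in> PP" using q0 unfolding PP_def St_def by simp
      have pPP: "p \<in> PP" unfolding p_def using finPP nePP by (intro Max_in) auto
      have pq: "p < q" "St p" using pPP unfolding PP_def by auto
      have btw: "\<not> dec j \<and> \<not> rst j" if "p < j" "j < q" for j
      proof -
        have "\<not> St j"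
        proof
          assume "St j"
          then have "j \<in> PP" using that unfolding PP_def by simp
          then have "j \<le> p" unfolding p_def using finPP by (intro Max_ge) auto
          then show False using that by simp
        qed
        then show ?thesis unfolding St_def by simp
      qed
      have sp: "xr p = xrec p \<and> a (Suc p) = frec p \<and> sig (Suc p) = tt p"
        using start_rec[of p] pq(2) unfolding St_def by blast
      have grp: "a (Suc (p + i)) = frec p \<and> dd (Suc (p + i)) = dd (Suc p) \<and> sig (Suc (p + i)) = sum tt {p..p + i}"
        if "p + i < q" for i
        using that
      proof (induction i)
        case 0 then show ?case using sp by simp
      next
        case (Suc i)
        have b: "\<not> dec (Suc (p + i)) \<and> \<not> rst (Suc (p + i))" using btw[of "Suc (p + i)"] Suc.prems by simp
        have IH: "a (Suc (p + i)) = frec p \<and> dd (Suc (p + i)) = dd (Suc p) \<and> sig (Suc (p + i)) = sum tt {p..p + i}"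
          using Suc.IH Suc.prems by simp
        show ?case using IH b a_Suc[of "Suc (p + i)"] dd_Suc[of "Suc (p + i)"] sig_Suc[of "Suc (p + i)"]
          by simp
      qed
      define i0 where "i0 = q - p - 1"
      have qi0: "q = Suc (p + i0)" using pq(1) unfolding i0_def by simp
      define del where "del = dd q"
      have delp: "del > 0" using dd_pos by (simp add: del_def)
      have dels: "del < ds" using K1[OF q(1)] by (simp add: del_def)
      have dgrp: "dd (Suc (p + i)) = del" if "p + i < q" for i
        using grp[OF that] grp[of i0] qi0 by (simp add: del_def)
      have sigq: "sig q = sum tt {p..p + i0}" using grp[of i0] qi0 by simp
      have sigqR: "sig q > R" using q(2) unfolding rst_def by simp
      define lam0 where "lam0 = del / eta0"
      have lam0: "0 < lam0" "lam0 \<le> 1" using delp dels eta0p unfolding lam0_def ds_def by auto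
      define y' where "y' = (1 - lam0) *\<^sub>R xrec p + lam0 *\<^sub>R y"
      have y'C: "y' \<in> C" unfolding y'_def using lam0 xrecC[of p] yC by (intro convexD[OF C_convex]) auto
      have fy': "f y' \<le> (1 - lam0) * f (xrec p) + lam0 * f y"
        unfolding y'_def using lam0 by (intro convex_onD[OF f_convex]) auto
      have Fge: "f (xrec p) - f y \<ge> 2 * eta0" using recf[of p] frec_c[of p] unfolding eta0_def by simp
      have "lam0 * (f (xrec p) - f y) \<ge> lam0 * (2 * eta0)" using Fge lam0 by (intro mult_left_mono) auto
      moreover have "lam0 * (2 * eta0) = 2 * del" using eta0p unfolding lam0_def by simp
      ultimately have fy'2: "f y' \<le> frec p - 2 * del" using fy' recf[of p] by (simp add: algebra_simps)
      have flevg: "flev (p + i) = frec p - del" if "p + i < q" for i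
        using flev_eq[of "p + i"] grp[OF that] dgrp[OF that] by simp
      have fsum: "norm (x (Suc (p + i)) - y')^2 \<le> norm (xr p - y')^2 - (2 * del / L) * sum tt {p..p + i}"
        if "p + i < q" for i
        using that
      proof (induction i)
        case 0
        have "norm (x (Suc p) - y')^2 \<le> norm (xr p - y')^2 - 2 * (tt p / norm (s p)) * del"
          using fejer[OF y'C, of p del] flevg[of 0] 0 fy'2 delp by simp
        moreover have "tt p / L \<le> tt p / norm (s p)"
          using sL[of p] snz[of p] L tt_pos[of p] by (intro divide_left_mono) auto
        then have "2 * (tt p / L) * del \<le> 2 * (tt p / norm (s p)) * del" using delp by (intro mult_right_mono) auto
        moreover have "(2 * del / L) * sum tt {p..p} = 2 * (tt p / L) * del" by simp
        ultimately show ?case unfolding add_0_right by linarith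
      next
        case (Suc i)
        define j where "j = Suc (p + i)"
        have jq: "p + Suc i < q" using Suc.prems .
        have xrj: "xr j = x j" using btw[of j] jq xr_cases[of j] unfolding j_def by simp
        have "norm (x (Suc j) - y')^2 \<le> norm (xr j - y')^2 - 2 * (tt j / norm (s j)) * del"
          using fejer[OF y'C, of j del] flevg[OF jq] fy'2 delp unfolding j_def by simp
        moreover have "tt j / L \<le> tt j / norm (s j)"
          using sL[of j] snz[of j] L tt_pos[of j] by (intro divide_left_mono) auto
        then have "2 * (tt j / L) * del \<le> 2 * (tt j / norm (s j)) * del" using delp by (intro mult_right_mono) auto
        moreover have "norm (x j - y')^2 \<le> norm (xr p - y')^2 - (2 * del / L) * sum tt {p..p + i}"
          using Suc.IH jq unfolding j_def by simp
        moreover have "(2 * del / L) * sum tt {p..p + Suc i} = (2 * del / L) * sum tt {p..p + i} + 2 * (tt j / L) * del"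
          unfolding j_def by (simp add: algebra_simps)
        moreover have "Suc (p + Suc i) = Suc j" unfolding j_def by simp
        ultimately show ?case using xrj by (simp only:)
      qed
      have F: "norm (x (Suc (p + i0)) - y')^2 \<le> norm (xr p - y')^2 - (2 * del / L) * sum tt {p..p + i0}"
        using fsum[of i0] qi0 by simp
      then have "(2 * del / L) * sum tt {p..p + i0} \<le> norm (xr p - y')^2"
        using zero_le_power2[of "norm (x (Suc (p + i0)) - y')"] by linarith
      then have Z: "(2 * del / L) * sig q \<le> norm (xr p - y')^2" using sigq by simp
      have "xr p - y' = lam0 *\<^sub>R (xrec p - y)" using sp unfolding y'_def by (simp add: algebra_simps)
      then have "norm (xr p - y') = lam0 * norm (xrec p - y)" using lam0 by simp
      also have "\<dots> \<le> lam0 * M" using xrecM[of p] lam0 by (intro mult_left_mono) auto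
      finally have "norm (xr p - y')^2 \<le> (lam0 * M)^2" by (rule power_mono) simp
      with Z have Z2: "(2 * del / L) * sig q \<le> (lam0 * M)^2" by simp
      have "(2 * del / L) * R < (2 * del / L) * sig q" using sigqR delp L by (intro mult_strict_left_mono) auto
      moreover have "(lam0 * M)^2 = (del / eta0)^2 * M^2" unfolding lam0_def by (simp add: power_mult_distrib power_divide)
      ultimately have "(2 * del / L) * R < (del / eta0)^2 * M^2" using Z2 by linarith
      then have "2 * del * R * eta0^2 < del^2 * M^2 * L"
        using L eta0p by (simp add: field_simps)
      then have c1: "2 * R * eta0^2 < del * M^2 * L"
        using delp by (simp add: power2_eq_square algebra_simps)
      have "del < R * eta0^2 / (L * (M^2 + 1))" using dels unfolding ds_def by simp
      then have c2: "del * (L * (M^2 + 1)) < R * eta0^2" using pos_less_divide_eq[OF LMp] by blast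
      have "del * M^2 * L \<le> del * (L * (M^2 + 1))" using delp L by (simp add: algebra_simps)
      with c1 c2 have "R * eta0^2 < 0" by linarith
      moreover have "R * eta0^2 > 0" using R eta0p by simp
      ultimately show False by linarith
    qed
  qed
  show ?thesis
  proof (rule antisym)
    show "(INF k. ereal (f (x k))) \<le> (INF y\<in>C. ereal (f y))"
    proof (rule INF_greatest)
      fix y assume yC: "y \<in> C"
      show "(INF k. ereal (f (x k))) \<le> ereal (f y)"
      proof (rule ccontr)
        assume "\<not> (INF k. ereal (f (x k))) \<le> ereal (f y)"
        then have lt: "ereal (f y) < (INF k. ereal (f (x k)))" by simp
        have up: "(INF k. ereal (f (x k))) \<le> ereal (f (x 0))" by (rule INF_lower) simp
        obtain c where cdef: "(INF k. ereal (f (x k))) = ereal c"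
          using lt up by (cases "(INF k. ereal (f (x k)))") auto
        have fyc: "f y < c" using lt cdef by simp
        have fxc: "c \<le> f (x k)" for k
        proof -
          have "(INF k. ereal (f (x k))) \<le> ereal (f (x k))" by (rule INF_lower) simp
          then show ?thesis using cdef by simp
        qed
        show False using core[OF yC fyc fxc] .
      qed
    qed
  next
    show "(INF y\<in>C. ereal (f y)) \<le> (INF k. ereal (f (x k)))"
      by (rule INF_greatest) (rule INF_lower, rule xC)
  qed

qed
end
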